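(* Let $q$, $\phi,\theta$, $U_1$ and $a^*,b^*,c^*$ be as in the context. (i) For fixed $c>0$ let $\gamma(x)=\int_c^xdt/R_1(t,\lambda)$ and $U_2=(P_1\cos2\gamma+(Q_1/R_1)\sin2\gamma-(2/R_1)\cos2\gamma,\ Q_1\cos2\gamma+2\sin2\gamma,\ R_1\cos2\gamma)^T$, $U_3=(P_1\sin2\gamma-(Q_1/R_1)\cos2\gamma-(2/R_1)\sin2\gamma,\ Q_1\sin2\gamma-2\cos2\gamma,\ R_1\sin2\gamma)^T$; for any constants $\beta_2,\beta_3$, if $R$ is the third component of $\beta_2U_2+\beta_3U_3$, then for every $x_0>0$, $\lim_{N\to\infty}\int_{x_0}^NR\,dx\big/\int_{x_0}^NR_1\,dx=0$. (ii) $a^*(\lambda)>0$ and $c^*(\lambda)>0$ for all $\lambda\in(0,\infty)$.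
   Context: $-y''+qy=\lambda y$ on $(0,\infty)$, $\lambda>0$, $q(x)=\frac{q_0}{x^2}+\frac{q_1}{x}+\sum_{n\ge0}q_{n+2}x^n$ with real coefficients, series convergent on $(0,\infty)$, $q_0\ge-\tfrac14$, $q_0,q_1$ not both zero, $q\to0$ at $\infty$, and for some $x_0>0$ either $q\in L_1(x_0,\infty)$ or ($q'\in L_1(x_0,\infty)$, $q\in AC_{loc}[x_0,\infty)$). $\phi,\theta$: with $q_0=\nu^2-\frac14$, $\nu\ge0$, $\phi=x^{1/2+\nu}(1+\sum_{n\ge1}a_n(\lambda)x^n)$ is the Frobenius solution at $0$ for the larger indicial root, $y_2$ a second (possibly logarithmic) Frobenius solution with leading coefficient $1$ and coefficients real polynomials in $\lambda$, $C=W(\phi,y_2)\ne0$ real, $\theta=y_2/C$ so $W(\phi,\theta)=1$. Appell system: $(P,Q,R)'=M(P,Q,R)^T$, $M=\begin{pmatrix}0&\lambda-q&0\\-2&0&2(\lambda-q)\\0&-1&0\end{pmatrix}$; $U_1=(P_1,Q_1,R_1)^T$ is its unique solution with $\lim_{x\to\infty}U_1=(\sqrt\lambda,0,1/\sqrt\lambda)^T$ (and $R_1>0$ on $(0,\infty)$). $a^*,b^*,c^*$ are the real coefficients with $U_1=a^*((\theta')^2,-2\theta\theta',\theta^2)^T+b^*(\theta'\phi',-(\theta\phi'+\theta'\phi),\theta\phi)^T+c^*((\phi')^2,-2\phi\phi',\phi^2)^T$. *)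

theory Defs
  imports "HOL-Analysis.Analysis"
begin

definition wronskian :: "(real \<Rightarrow> real) \<Rightarrow> (real \<Rightarrow> real) \<Rightarrow> real \<Rightarrow> real" where
  "wronskian f g x = f x * deriv g x - deriv f x * g x"

definition is_solution :: "(real \<Rightarrow> real) \<Rightarrow> real \<Rightarrow> (real \<Rightarrow> real) \<Rightarrow> bool" where
  "is_solution q lam y \<longleftrightarrow>
     (\<forall>x>0. y differentiable (at x) \<and> (deriv y) differentiable (at x) \<and>
            - deriv (deriv y) x + q x * y x = lam * y x)"

definition abs_cont_on_interval :: "(real \<Rightarrow> real) \<Rightarrow> real \<Rightarrow> real \<Rightarrow> bool" where
  "abs_cont_on_interval f a b \<longleftrightarrow>
     (\<forall>\<epsilon>>0. \<exists>\<delta>>0. \<forall>(n::nat) (u::nat \<Rightarrow> real) v.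
        (\<forall>i<n. a \<le> u i \<and> u i \<le> v i \<and> v i \<le> b) \<and>
        (\<forall>i<n. \<forall>j<n. i \<noteq> j \<longrightarrow> v i \<le> u j \<or> v j \<le> u i) \<and>
        (\<Sum>i<n. v i - u i) < \<delta>
        \<longrightarrow> (\<Sum>i<n. \<bar>f (v i) - f (u i)\<bar>) < \<epsilon>)"

definition AC_loc_from :: "(real \<Rightarrow> real) \<Rightarrow> real \<Rightarrow> bool" where
  "AC_loc_from f x0 \<longleftrightarrow> (\<forall>b\<ge>x0. abs_cont_on_interval f x0 b)"

definition appell_solution ::
  "(real \<Rightarrow> real) \<Rightarrow> real \<Rightarrow> (real \<Rightarrow> real) \<Rightarrow> (real \<Rightarrow> real) \<Rightarrow> (real \<Rightarrow> real) \<Rightarrow> bool" where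
  "appell_solution q lam P Q R \<longleftrightarrow>
     (\<forall>x>0. (P has_real_derivative ((lam - q x) * Q x)) (at x) \<and>
            (Q has_real_derivative (-2 * P x + 2 * (lam - q x) * R x)) (at x) \<and>
            (R has_real_derivative (- Q x)) (at x))"

definition gamma_fun :: "(real \<Rightarrow> real) \<Rightarrow> real \<Rightarrow> real \<Rightarrow> real" where
  "gamma_fun R1 c x =
     (if c \<le> x then integral {c..x} (\<lambda>t. 1 / R1 t) else - integral {x..c} (\<lambda>t. 1 / R1 t))"

definition U2 :: "(real \<Rightarrow> real) \<Rightarrow> (real \<Rightarrow> real) \<Rightarrow> (real \<Rightarrow> real) \<Rightarrow> real \<Rightarrow> real \<Rightarrow> real \<times> real \<times> real" where
  "U2 P1 Q1 R1 c x =
     (let g = gamma_fun R1 c x in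
      (P1 x * cos (2*g) + (Q1 x / R1 x) * sin (2*g) - (2 / R1 x) * cos (2*g),
       Q1 x * cos (2*g) + 2 * sin (2*g),
       R1 x * cos (2*g)))"

definition U3 :: "(real \<Rightarrow> real) \<Rightarrow> (real \<Rightarrow> real) \<Rightarrow> (real \<Rightarrow> real) \<Rightarrow> real \<Rightarrow> real \<Rightarrow> real \<times> real \<times> real" where
  "U3 P1 Q1 R1 c x =
     (let g = gamma_fun R1 c x in
      (P1 x * sin (2*g) - (Q1 x / R1 x) * cos (2*g) - (2 / R1 x) * sin (2*g),
       Q1 x * sin (2*g) - 2 * cos (2*g),
       R1 x * sin (2*g)))"

end

theory Submission
  imports Defs
begin

lemma int_deriv:
  fixes f :: "real \<Rightarrow> real"
  assumes "continuous_on {a..} f" "a < t"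
  shows "((\<lambda>x. integral {a..x} f) has_real_derivative f t) (at t)"
proof -
  have "continuous_on {a..t+1} f" using assms(1) by (rule continuous_on_subset) auto
  from integral_has_real_derivative[OF this, of t] assms(2)
  show ?thesis by (simp add: at_within_Icc_at)
qed

lemma quad_ident:
  fixes a b c T P t p :: real
  shows "(a*T^2 + b*(T*P) + c*P^2) * (a*t^2 + b*(t*p) + c*p^2)
     - (a*(-2*t*T) + b*(-(t*P + T*p)) + c*(-2*p*P))^2/4
     = (a*c - b^2/4) * (p*T - P*t)^2"
  by (simp add: field_simps power2_eq_square)

lemma trig_bound:
  fixes b2 b3 y :: real
  shows "\<bar>b2 * sin y - b3 * cos y\<bar> \<le> \<bar>b2\<bar> + \<bar>b3\<bar>"
proof -
  have "\<bar>b2 * sin y - b3 * cos y\<bar> \<le> \<bar>b2 * sin y\<bar> + \<bar>b3 * cos y\<bar>" by (rule abs_triangle_ineq4)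
  also have "\<dots> \<le> \<bar>b2\<bar> + \<bar>b3\<bar>"
    unfolding abs_mult by (intro add_mono mult_left_le) auto
  finally show ?thesis .
qed

lemma ratio_help:
  fixes A B C D N :: real
  assumes "N \<noteq> 0" shows "(A/N - B/N + C/N)/(D/N) = (A - B + C)/D"
proof -
  have "A/N - B/N + C/N = (A - B + C)/N" by (simp add: diff_divide_distrib add_divide_distrib)
  then show ?thesis using assms by simp
qed

lemma cesaro_int:
  fixes f :: "real \<Rightarrow> real"
  assumes "continuous_on {a..} f" "(f \<longlongrightarrow> L) at_top"
  shows "((\<lambda>N. integral {a..N} f / N) \<longlongrightarrow> L) at_top"
proof (rule lhospital_at_top_at_top[where g' = "\<lambda>_. 1" and f' = f])
  show "LIM x at_top. x :> at_top" by (rule filterlim_ident)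
  show "\<forall>\<^sub>F x in at_top. (1::real) \<noteq> 0" by simp
  show "\<forall>\<^sub>F x in at_top. ((\<lambda>N. integral {a..N} f) has_real_derivative f x) (at x)"
    using eventually_gt_at_top[of a] by eventually_elim (rule int_deriv[OF assms(1)])
  show "\<forall>\<^sub>F x in at_top. ((\<lambda>x. x) has_real_derivative 1) (at x)" by (auto intro!: derivative_eq_intros)
  show "((\<lambda>x. f x / 1) \<longlongrightarrow> L) at_top" using assms(2) by simp
qed

theorem mainTheorem9:
  fixes q :: "real \<Rightarrow> real" and q0 q1 :: real and qs :: "nat \<Rightarrow> real"
    and lam \<nu> :: real
    and \<phi> y2 \<theta> :: "real \<Rightarrow> real" and C :: real
    and P1 Q1 R1 :: "real \<Rightarrow> real" and astar bstar cstar :: real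
  assumes lam_pos: "lam > 0"
    and q_conv: "\<forall>x>0. summable (\<lambda>n. qs n * x ^ n)"
    and q_def: "\<forall>x>0. q x = q0 / x\<^sup>2 + q1 / x + (\<Sum>n. qs n * x ^ n)"
    and q0_ge: "q0 \<ge> -1/4"
    and q01_nz: "q0 \<noteq> 0 \<or> q1 \<noteq> 0"
    and q_lim: "(q \<longlongrightarrow> 0) at_top"
    and q_int: "\<exists>x0>0. q absolutely_integrable_on {x0..} \<or>
                 ((\<lambda>x. deriv q x) absolutely_integrable_on {x0..} \<and> AC_loc_from q x0)"
    and nu: "\<nu> \<ge> 0" "q0 = \<nu>\<^sup>2 - 1/4"
    and phi_sol: "is_solution q lam \<phi>"
    and phi_frob: "\<exists>a::nat \<Rightarrow> real. a 0 = 1 \<and> (\<forall>x>0. summable (\<lambda>n. a n * x ^ n)) \<and>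
                    (\<forall>x>0. \<phi> x = x powr (1/2 + \<nu>) * (\<Sum>n. a n * x ^ n))"
    and y2_sol: "is_solution q lam y2"
    and y2_frob: "\<exists>(\<kappa>::real) (b::nat \<Rightarrow> real).
                    (\<forall>x>0. summable (\<lambda>n. b n * x ^ n)) \<and>
                    (\<nu> > 0 \<longrightarrow> b 0 = 1) \<and> (\<nu> = 0 \<longrightarrow> \<kappa> = 1) \<and>
                    (\<forall>x>0. y2 x = \<kappa> * \<phi> x * ln x + x powr (1/2 - \<nu>) * (\<Sum>n. b n * x ^ n))"
    and C_def: "\<forall>x>0. wronskian \<phi> y2 x = C"
    and C_nz: "C \<noteq> 0"
    and theta_def: "\<forall>x>0. \<theta> x = y2 x / C"
    and U1_sol: "appell_solution q lam P1 Q1 R1"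
    and U1_lim: "(P1 \<longlongrightarrow> sqrt lam) at_top" "(Q1 \<longlongrightarrow> 0) at_top"
                "(R1 \<longlongrightarrow> 1 / sqrt lam) at_top"
    and R1_pos: "\<forall>x>0. R1 x > 0"
    and coeffs: "\<forall>x>0.
        P1 x = astar * (deriv \<theta> x)\<^sup>2 + bstar * (deriv \<theta> x * deriv \<phi> x) + cstar * (deriv \<phi> x)\<^sup>2 \<and>
        Q1 x = astar * (-2 * \<theta> x * deriv \<theta> x)
               + bstar * (- (\<theta> x * deriv \<phi> x + deriv \<theta> x * \<phi> x))
               + cstar * (-2 * \<phi> x * deriv \<phi> x) \<and>
        R1 x = astar * (\<theta> x)\<^sup>2 + bstar * (\<theta> x * \<phi> x) + cstar * (\<phi> x)\<^sup>2"
  shows "(\<forall>c>0. \<forall>\<beta>2 \<beta>3 :: real. \<forall>x0>0.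
            let R = (\<lambda>x. snd (snd (\<beta>2 *\<^sub>R U2 P1 Q1 R1 c x + \<beta>3 *\<^sub>R U3 P1 Q1 R1 c x))) in
            ((\<lambda>N. integral {x0..N} R / integral {x0..N} R1) \<longlongrightarrow> 0) at_top)
         \<and> astar > 0 \<and> cstar > 0"
proof -
  have R1d: "\<And>x. x > 0 \<Longrightarrow> (R1 has_real_derivative (- Q1 x)) (at x)"
    and Q1d: "\<And>x. x > 0 \<Longrightarrow> (Q1 has_real_derivative (-2 * P1 x + 2 * (lam - q x) * R1 x)) (at x)"
    using U1_sol unfolding appell_solution_def by auto
  have R1c: "\<And>x. x > 0 \<Longrightarrow> isCont R1 x" using R1d DERIV_isCont by blast
  have Q1c: "\<And>x. x > 0 \<Longrightarrow> isCont Q1 x" using Q1d DERIV_isCont by blast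
  have thd: "deriv \<theta> x = deriv y2 x / C" if "x > 0" for x
  proof -
    have "y2 differentiable (at x)" using y2_sol that unfolding is_solution_def by auto
    then have "(y2 has_real_derivative deriv y2 x) (at x)" using DERIV_deriv_iff_real_differentiable by blast
    then have "((\<lambda>t. y2 t / C) has_real_derivative deriv y2 x / C) (at x)"
      using C_nz by (auto intro!: derivative_eq_intros)
    then have "(\<theta> has_real_derivative deriv y2 x / C) (at x)"
      by (rule has_field_derivative_transform_within_open[where S="{0<..}"]) (use that theta_def in auto)
    then show ?thesis by (rule DERIV_imp_deriv)
  qed
  have W1: "\<phi> x * deriv \<theta> x - deriv \<phi> x * \<theta> x = 1" if "x > 0" for x
  proof -
    have "C * (\<phi> x * deriv \<theta> x - deriv \<phi> x * \<theta> x) = \<phi> x * deriv y2 x - deriv \<phi> x * y2 x"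
    proof -
      have e1: "y2 x = C * \<theta> x" using theta_def[rule_format, OF that] C_nz by simp
      have e2: "deriv y2 x = C * deriv \<theta> x" using thd[OF that] C_nz by simp
      show ?thesis unfolding e1 e2 by (simp add: algebra_simps)
    qed
    also have "\<dots> = C" using C_def[rule_format, OF that] unfolding wronskian_def .
    finally show ?thesis using C_nz by simp
  qed
  define D where "D = astar * cstar - bstar^2/4"
  have ident: "P1 x * R1 x - (Q1 x)^2/4 = D" if "x > 0" for x
  proof -
    have "P1 x * R1 x - (Q1 x)^2/4 = D * (\<phi> x * deriv \<theta> x - deriv \<phi> x * \<theta> x)^2"
      using coeffs[rule_format, OF that] unfolding D_def
      using quad_ident[where a=astar and b=bstar and c=cstar and T="deriv \<theta> x" and P="deriv \<phi> x" and t="\<theta> x" and p="\<phi> x"]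
      by auto
    then show ?thesis using W1[OF that] by simp
  qed
  have "((\<lambda>x. P1 x * R1 x - (Q1 x)^2/4) \<longlongrightarrow> sqrt lam * (1 / sqrt lam) - 0^2/4) at_top"
    using U1_lim by (intro tendsto_intros) auto
  moreover have "sqrt lam * (1 / sqrt lam) - 0^2/4 = (1::real)" using lam_pos by simp
  ultimately have "((\<lambda>x. P1 x * R1 x - (Q1 x)^2/4) \<longlongrightarrow> 1) at_top" by simp
  moreover have "((\<lambda>x. P1 x * R1 x - (Q1 x)^2/4) \<longlongrightarrow> D) at_top"
    by (rule tendsto_eventually, rule eventually_mono[OF eventually_gt_at_top[of 0]], rule ident)
  ultimately have D1: "D = 1" by (metis tendsto_unique trivial_limit_at_top_linorder)
  have R11: "astar * (\<theta> 1)\<^sup>2 + bstar * (\<theta> 1 * \<phi> 1) + cstar * (\<phi> 1)\<^sup>2 > 0"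
    using R1_pos coeffs by force
  have ac: "astar * cstar = 1 + bstar^2/4" using D1 D_def by simp
  have acpos: "1 + bstar^2/4 > (0::real)" by (simp add: add_pos_nonneg)
  have apos: "astar > 0"
  proof (rule ccontr)
    assume "\<not> astar > 0"
    then have "astar < 0" using ac by (cases "astar = 0") (use acpos in auto)
    have "4 * astar * (astar * (\<theta> 1)\<^sup>2 + bstar * (\<theta> 1 * \<phi> 1) + cstar * (\<phi> 1)\<^sup>2)
        = (2*astar*\<theta> 1 + bstar * \<phi> 1)^2 + (4*astar*cstar - bstar^2) * (\<phi> 1)^2"
      by (simp add: algebra_simps power2_eq_square)
    also have "\<dots> = (2*astar*\<theta> 1 + bstar * \<phi> 1)^2 + 4 * (\<phi> 1)^2" using ac by simp
    also have "\<dots> \<ge> 0" by simp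
    finally show False using R11 \<open>astar < 0\<close> by (simp add: mult_less_0_iff zero_le_mult_iff)
  qed
  have cpos: "cstar > 0"
  proof (rule ccontr)
    assume "\<not> cstar > 0"
    then have "cstar < 0" using ac by (cases "cstar = 0") (use acpos in auto)
    have "4 * cstar * (astar * (\<theta> 1)\<^sup>2 + bstar * (\<theta> 1 * \<phi> 1) + cstar * (\<phi> 1)\<^sup>2)
        = (2*cstar*\<phi> 1 + bstar * \<theta> 1)^2 + (4*astar*cstar - bstar^2) * (\<theta> 1)^2"
      by (simp add: algebra_simps power2_eq_square)
    also have "\<dots> = (2*cstar*\<phi> 1 + bstar * \<theta> 1)^2 + 4 * (\<theta> 1)^2" using ac by simp
    also have "\<dots> \<ge> 0" by simp
    finally show False using R11 \<open>cstar < 0\<close> by (simp add: mult_less_0_iff zero_le_mult_iff)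
  qed
  have part1: "\<forall>c>0. \<forall>\<beta>2 \<beta>3 :: real. \<forall>x0>0.
            let R = (\<lambda>x. snd (snd (\<beta>2 *\<^sub>R U2 P1 Q1 R1 c x + \<beta>3 *\<^sub>R U3 P1 Q1 R1 c x))) in
            ((\<lambda>N. integral {x0..N} R / integral {x0..N} R1) \<longlongrightarrow> 0) at_top"
  proof (intro allI impI)
    fix c \<beta>2 \<beta>3 x0 :: real
    assume c: "c > 0" and x0: "x0 > 0"
    define a where "a = min x0 c / 2"
    have a: "a > 0" "a < x0" "a < c" using c x0 unfolding a_def by auto
    define f where "f = (\<lambda>t. 1 / R1 t)"
    define g where "g = gamma_fun R1 c"
    have R1con: "continuous_on {a..} R1"
      using R1c a by (intro continuous_at_imp_continuous_on) auto
    have fcon: "continuous_on {a..} f"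
    proof -
      have "\<forall>t\<in>{a..}. R1 t \<noteq> 0" using R1_pos a by (auto, metis less_le_trans less_irrefl)
      then show ?thesis unfolding f_def using R1con by (intro continuous_intros) auto
    qed
    have gint: "g x = integral {a..x} f - integral {a..c} f" if "x \<ge> a" for x
    proof (cases "c \<le> x")
      case True
      have "f integrable_on {a..x}"
        using continuous_on_subset[OF fcon] by (intro integrable_continuous_real) auto
      from Henstock_Kurzweil_Integration.integral_combine[OF _ True this] a have "integral {a..c} f + integral {c..x} f = integral {a..x} f"
        by simp
      then show ?thesis using True unfolding g_def gamma_fun_def f_def by simp
    next
      case False
      have "f integrable_on {a..c}"
        using continuous_on_subset[OF fcon] by (intro integrable_continuous_real) auto
      from Henstock_Kurzweil_Integration.integral_combine[OF that _ this] False have "integral {a..x} f + integral {x..c} f = integral {a..c} f"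
        by simp
      then show ?thesis using False unfolding g_def gamma_fun_def f_def by simp
    qed
    have gd: "(g has_real_derivative f t) (at t)" if "t > a" for t
    proof -
      have "((\<lambda>x. integral {a..x} f - integral {a..c} f) has_real_derivative f t) (at t)"
        using DERIV_diff[OF int_deriv[OF fcon that] DERIV_const] by simp
      then show ?thesis
        by (rule has_field_derivative_transform_within_open[where S="{a<..}"]) (use that gint in auto)
    qed
    have gc: "isCont g t" if "t > a" for t using gd[OF that] DERIV_isCont by blast
    define Rf where "Rf = (\<lambda>x. snd (snd (\<beta>2 *\<^sub>R U2 P1 Q1 R1 c x + \<beta>3 *\<^sub>R U3 P1 Q1 R1 c x)))"
    have Rf_eq: "Rf x = \<beta>2 * (R1 x * cos (2 * g x)) + \<beta>3 * (R1 x * sin (2 * g x))" for x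
      unfolding Rf_def g_def by (simp add: U2_def U3_def Let_def)
    define F where "F = (\<lambda>x. \<beta>2 * (R1 x ^ 2 * sin (2 * g x) / 2) - \<beta>3 * (R1 x ^ 2 * cos (2 * g x) / 2))"
    define E where "E = (\<lambda>x. R1 x * Q1 x * (\<beta>2 * sin (2 * g x) - \<beta>3 * cos (2 * g x)))"
    have Fd: "(F has_real_derivative (Rf t - E t)) (at t)" if "t > a" for t
    proof -
      have t0: "t > 0" using that a by simp
      have Rne: "R1 t \<noteq> 0" using R1_pos t0 by (metis less_irrefl)
      show ?thesis
        unfolding F_def
        apply (rule derivative_eq_intros R1d[OF t0] gd[OF that] refl | simp)+
        using Rne unfolding Rf_eq E_def f_def
        apply (simp add: field_simps power2_eq_square)
        done
    qed
    have Ec: "isCont E t" if "t > a" for t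
    proof -
      have t0: "t > 0" using that a by simp
      show ?thesis unfolding E_def using R1c[OF t0] Q1c[OF t0] gc[OF that]
        by (intro continuous_intros)
    qed
    have Econ: "continuous_on {x0..} E"
      using Ec a by (intro continuous_at_imp_continuous_on) auto
    have R1con0: "continuous_on {x0..} R1"
      by (rule continuous_on_subset[OF R1con]) (use a in auto)
    have int_eq: "integral {x0..N} Rf = F N - F x0 + integral {x0..N} E" if N: "N \<ge> x0" for N
    proof -
      have "((\<lambda>x. Rf x - E x) has_integral (F N - F x0)) {x0..N}"
      proof (rule fundamental_theorem_of_calculus[OF N])
        fix x assume "x \<in> {x0..N}"
        then have "x > a" using a by auto
        from Fd[OF this] have "(F has_vector_derivative (Rf x - E x)) (at x)"
          unfolding has_real_derivative_iff_has_vector_derivative .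
        then show "(F has_vector_derivative (Rf x - E x)) (at x within {x0..N})"
          by (rule has_vector_derivative_at_within)
      qed
      moreover have "(E has_integral integral {x0..N} E) {x0..N}"
        using continuous_on_subset[OF Econ, of "{x0..N}"]
        by (intro integrable_integral integrable_continuous_real) auto
      ultimately have "((\<lambda>x. Rf x - E x + E x) has_integral (F N - F x0 + integral {x0..N} E)) {x0..N}"
        by (rule has_integral_add)
      then show ?thesis by (simp add: integral_unique)
    qed
    define K where "K = \<bar>\<beta>2\<bar> + \<bar>\<beta>3\<bar>"
    have Ebound: "norm (E x) \<le> \<bar>R1 x * Q1 x\<bar> * K" for x
      unfolding E_def K_def real_norm_def abs_mult[of "R1 x * Q1 x"]
      by (intro mult_left_mono trig_bound) simp
    have Elim: "(E \<longlongrightarrow> 0) at_top"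
    proof (rule Lim_null_comparison[OF always_eventually[OF allI[OF Ebound]]])
      have "((\<lambda>x. \<bar>R1 x * Q1 x\<bar> * K) \<longlongrightarrow> \<bar>1 / sqrt lam * 0\<bar> * K) at_top"
        using U1_lim by (intro tendsto_intros) auto
      then show "((\<lambda>x. \<bar>R1 x * Q1 x\<bar> * K) \<longlongrightarrow> 0) at_top" by simp
    qed
    have lim1: "((\<lambda>N. integral {x0..N} E / N) \<longlongrightarrow> 0) at_top"
      by (rule cesaro_int[OF Econ Elim])
    have lim2: "((\<lambda>N. integral {x0..N} R1 / N) \<longlongrightarrow> 1 / sqrt lam) at_top"
      by (rule cesaro_int[OF R1con0 U1_lim(3)])
    have inv0: "((\<lambda>N::real. inverse N) \<longlongrightarrow> 0) at_top"
      by (rule tendsto_inverse_0_at_top[OF filterlim_ident])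
    have Fbound: "norm (F N / N) \<le> (R1 N)^2 / 2 * K * inverse N" if "N > 0" for N
    proof -
      have "F N / N = (R1 N)^2 / 2 * (\<beta>2 * sin (2 * g N) - \<beta>3 * cos (2 * g N)) * inverse N"
        unfolding F_def by (simp add: field_simps)
      then have "norm (F N / N) = \<bar>(R1 N)^2 / 2 * (\<beta>2 * sin (2 * g N) - \<beta>3 * cos (2 * g N)) * inverse N\<bar>"
        by (simp only: real_norm_def)
      also have "\<dots> = (R1 N)^2 / 2 * \<bar>\<beta>2 * sin (2 * g N) - \<beta>3 * cos (2 * g N)\<bar> * inverse N"
        using that unfolding abs_mult by simp
      also have "\<dots> \<le> (R1 N)^2 / 2 * K * inverse N"
        unfolding K_def using that by (intro mult_right_mono mult_left_mono trig_bound) auto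
      finally show ?thesis by simp
    qed
    have lim3: "((\<lambda>N. F N / N) \<longlongrightarrow> 0) at_top"
    proof (rule Lim_null_comparison)
      show "\<forall>\<^sub>F N in at_top. norm (F N / N) \<le> (R1 N)^2 / 2 * K * inverse N"
        using eventually_gt_at_top[of 0] by eventually_elim (rule Fbound)
      have "((\<lambda>N. (R1 N)^2 / 2 * K * inverse N) \<longlongrightarrow> (1 / sqrt lam)^2 / 2 * K * 0) at_top"
        using U1_lim(3) inv0 by (intro tendsto_intros) auto
      then show "((\<lambda>N. (R1 N)^2 / 2 * K * inverse N) \<longlongrightarrow> 0) at_top" by simp
    qed
    have lim4: "((\<lambda>N. F x0 / N) \<longlongrightarrow> 0) at_top"
      by (rule tendsto_divide_0[OF tendsto_const filterlim_at_top_imp_at_infinity[OF filterlim_ident]])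
    have "((\<lambda>N. F N / N - F x0 / N + integral {x0..N} E / N) \<longlongrightarrow> 0 - 0 + 0) at_top"
      by (intro tendsto_intros lim1 lim3 lim4)
    then have "((\<lambda>N. (F N / N - F x0 / N + integral {x0..N} E / N) / (integral {x0..N} R1 / N))
        \<longlongrightarrow> (0 - 0 + 0) / (1 / sqrt lam)) at_top"
      using lam_pos by (intro tendsto_divide[OF _ lim2]) auto
    then have lim5: "((\<lambda>N. (F N / N - F x0 / N + integral {x0..N} E / N) / (integral {x0..N} R1 / N))
        \<longlongrightarrow> 0) at_top" by simp
    have main: "((\<lambda>N. integral {x0..N} Rf / integral {x0..N} R1) \<longlongrightarrow> 0) at_top"
    proof (rule Lim_transform_eventually[OF lim5])
      show "\<forall>\<^sub>F N in at_top. (F N / N - F x0 / N + integral {x0..N} E / N) / (integral {x0..N} R1 / N)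
          = integral {x0..N} Rf / integral {x0..N} R1"
        using eventually_ge_at_top[of x0]
      proof eventually_elim
        case (elim N)
        then have "N \<noteq> 0" using x0 by auto
        then show ?case unfolding int_eq[OF elim] by (rule ratio_help)
      qed
    qed
    show "let R = (\<lambda>x. snd (snd (\<beta>2 *\<^sub>R U2 P1 Q1 R1 c x + \<beta>3 *\<^sub>R U3 P1 Q1 R1 c x))) in
            ((\<lambda>N. integral {x0..N} R / integral {x0..N} R1) \<longlongrightarrow> 0) at_top"
      using main unfolding Rf_def Let_def .
  qed
  show ?thesis using part1 apos cpos by blast
qed

end
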